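(* Assume $\log_2 n$ and $\log_2\log_2 n$ are integers. Consider a perfect binary tree of height $h=\log_2 n-\log_2\log_2 n$ (so it has $n/\log_2 n$ leaves) in which every node stores a randomized splitter. At most $n$ processes each start at the root and repeatedly call $\mathrm{split}()$ on the splitter of their current node: on $\mathrm{stop}$ the process leaves the tree; on $\mathrm{left}$/$\mathrm{right}$ it moves to the left/right child (a process reaching a leaf node is said to visit it). Then for any (strong adaptive) adversary, with probability at least $1-1/n$ every leaf is visited by at most $4\log_2 n$ processes.
   Context: Randomized splitter: an object with a one-time operation $\mathrm{split}()$ returning $\mathrm{stop}$, $\mathrm{left}$ or $\mathrm{right}$, such that a lone caller stops, and every caller that does not stop turns left or right with probability $1/2$ each, independently of all other processes and of the schedule. A strong adaptive adversary chooses each next step based on the entire past execution, including all coin-flip outcomes. *)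

theory Defs
  imports "HOL-Probability.Probability"
begin

text \<open>
  A node of the perfect binary tree is identified by its path from the root
  (a list of directions, True = right, False = left); leaves are the paths of
  length h.  An event records that process i called split() on the splitter of
  its current node with outcome None (stop) or Some b (move to child b).
\<close>

type_synonym event = "nat \<times> bool option"
type_synonym history = "event list"

definition path_of :: "history \<Rightarrow> nat \<Rightarrow> bool list" where
  "path_of hs i = [b. (j, Some b) \<leftarrow> hs, j = i]"

definition stopped :: "history \<Rightarrow> nat \<Rightarrow> bool" where
  "stopped hs i \<longleftrightarrow> (i, None) \<in> set hs"

definition active :: "nat \<Rightarrow> nat \<Rightarrow> history \<Rightarrow> nat \<Rightarrow> bool" where
  "active h m hs i \<longleftrightarrow> i < m \<and> \<not> stopped hs i \<and> length (path_of hs i) < h"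

text \<open>
  A (strong adaptive, deterministic) adversary maps the entire past execution,
  including all coin outcomes, to the process taking the next step and to whether
  that split() call returns stop.
\<close>
type_synonym adversary = "history \<Rightarrow> nat \<times> bool"

definition step :: "nat \<Rightarrow> nat \<Rightarrow> adversary \<Rightarrow> history \<Rightarrow> history pmf" where
  "step h m A hs =
     (let (i, s) = A hs in
      if active h m hs i then
        (if s then return_pmf (hs @ [(i, None)])
         else map_pmf (\<lambda>b. hs @ [(i, Some b)]) (bernoulli_pmf (1/2)))
      else return_pmf hs)"

fun exec :: "nat \<Rightarrow> nat \<Rightarrow> adversary \<Rightarrow> nat \<Rightarrow> history pmf" where
  "exec h m A 0 = return_pmf []"
| "exec h m A (Suc N) = bind_pmf (exec h m A N) (step h m A)"

definition leaf_visits :: "nat \<Rightarrow> history \<Rightarrow> bool list \<Rightarrow> nat" where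
  "leaf_visits m hs l = card {i. i < m \<and> path_of hs i = l}"

end

theory Submission
  imports Defs
begin

definition qv :: "history \<Rightarrow> bool list \<Rightarrow> nat \<Rightarrow> real" where
  "qv hs l i = (if take (length (path_of hs i)) l = path_of hs i
                then 2 ^ length (path_of hs i) / 2 ^ length l else 0)"

definition FF :: "nat \<Rightarrow> history \<Rightarrow> bool list \<Rightarrow> real" where
  "FF m hs l = (\<Prod>i<m. 1 + 3 * qv hs l i)"

lemma qv_nonneg: "qv hs l i \<ge> 0"
  by (simp add: qv_def)

lemma FF_nonneg: "FF m hs l \<ge> 0"
  unfolding FF_def by (auto intro!: prod_nonneg simp: add_nonneg_nonneg qv_nonneg)

lemma path_of_snoc:
  "path_of (hs @ [(i', x)]) j = path_of hs j @
     (if j = i' then (case x of Some b \<Rightarrow> [b] | None \<Rightarrow> []) else [])"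
  by (cases x) (auto simp: path_of_def)

lemma qv_snoc_other: "j \<noteq> i \<Longrightarrow> qv (hs @ [(i, x)]) l j = qv hs l j"
  by (simp add: qv_def path_of_snoc)

lemma qv_snoc_None: "qv (hs @ [(i, None)]) l j = qv hs l j"
  by (simp add: qv_def path_of_snoc)

lemma qv_sum:
  assumes "length (path_of hs i) < length l"
  shows "qv (hs @ [(i, Some True)]) l i + qv (hs @ [(i, Some False)]) l i = 2 * qv hs l i"
proof -
  let ?p = "path_of hs i"
  have tk: "take (length ?p + 1) l = take (length ?p) l @ [l ! length ?p]"
    using assms by (simp add: take_Suc_conv_app_nth)
  show ?thesis
  proof (cases "take (length ?p) l = ?p")
    case True
    then show ?thesis using tk
      by (cases "l ! length ?p") (auto simp: qv_def path_of_snoc)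
  next
    case False
    then show ?thesis using tk
      by (auto simp: qv_def path_of_snoc)
  qed
qed

lemma FF_split: "i < m \<Longrightarrow> FF m hs l = (1 + 3 * qv hs l i) * (\<Prod>j\<in>{..<m}-{i}. 1 + 3 * qv hs l j)"
  unfolding FF_def by (simp add: prod.remove)

lemma avg_aux: "a + b = 2 * c \<Longrightarrow> (1 + 3 * a) * P + (1 + 3 * b) * P = 2 * ((1 + 3 * c) * (P::real))"
proof -
  assume e: "a + b = 2 * c"
  have "(1 + 3 * a) * P + (1 + 3 * b) * P = 2 * P + 3 * ((a + b) * P)" by (simp add: algebra_simps)
  then show ?thesis using e by (simp add: algebra_simps)
qed

lemma half_enn: "0 \<le> x \<Longrightarrow> ennreal x * inverse 2 = ennreal (x / 2)"
  using divide_ennreal[of x 2] by (simp add: divide_ennreal_def)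

lemma FF_avg:
  assumes "active h m hs i" "length l = h"
  shows "FF m (hs @ [(i, Some True)]) l + FF m (hs @ [(i, Some False)]) l = 2 * FF m hs l"
proof -
  have im: "i < m" and lp: "length (path_of hs i) < length l"
    using assms by (auto simp: active_def)
  have R: "\<And>b. (\<Prod>j\<in>{..<m}-{i}. 1 + 3 * qv (hs @ [(i, Some b)]) l j)
            = (\<Prod>j\<in>{..<m}-{i}. 1 + 3 * qv hs l j)"
    by (intro prod.cong) (auto simp: qv_snoc_other)
  show ?thesis
    using avg_aux[OF qv_sum[OF lp]] unfolding FF_split[OF im, of "hs @ _"] FF_split[OF im, of hs] R
    .
qed

lemma FF_None: "FF m (hs @ [(i, None)]) l = FF m hs l"
  unfolding FF_def by (simp add: qv_snoc_None)

lemma step_FF: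
  assumes "length l = h"
  shows "(\<integral>\<^sup>+y. ennreal (FF m y l) \<partial>step h m A hs) = ennreal (FF m hs l)"
proof -
  obtain i s where As: "A hs = (i, s)" by force
  show ?thesis
  proof (cases "active h m hs i")
    case act: True
    show ?thesis
    proof (cases s)
      case True
      then show ?thesis using act As by (simp add: step_def FF_None FF_nonneg)
    next
      case False
      have "(\<integral>\<^sup>+y. ennreal (FF m y l) \<partial>step h m A hs)
          = (\<integral>\<^sup>+b. ennreal (FF m (hs @ [(i, Some b)]) l) \<partial>bernoulli_pmf (1/2))"
        using act As False by (simp add: step_def)
      also have "\<dots> = (\<Sum>b\<in>UNIV. ennreal (FF m (hs @ [(i, Some b)]) l) * pmf (bernoulli_pmf (1/2)) b)"
        by (rule nn_integral_measure_pmf_support) auto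
      also have "\<dots> = ennreal (FF m (hs @ [(i, Some True)]) l) * ennreal (1/2)
                  + ennreal (FF m (hs @ [(i, Some False)]) l) * ennreal (1/2)"
        by (simp add: UNIV_bool)
      also have "\<dots> = ennreal ((FF m (hs @ [(i, Some True)]) l + FF m (hs @ [(i, Some False)]) l) / 2)"
        by (simp add: half_enn FF_nonneg add_divide_distrib)
      also have "\<dots> = ennreal (FF m hs l)"
        using FF_avg[OF act assms] by simp
      finally show ?thesis .
    qed
  next
    case False
    then show ?thesis using As by (simp add: step_def FF_nonneg)
  qed
qed

definition Phi :: "nat \<Rightarrow> nat \<Rightarrow> history \<Rightarrow> real" where
  "Phi h m hs = (\<Sum>l\<in>{l::bool list. length l = h}. FF m hs l)"

lemma finite_leaves: "finite {l::bool list. length l = h}"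
  using finite_lists_length_eq[of "UNIV::bool set" h] by simp

lemma Phi_nonneg: "Phi h m hs \<ge> 0"
  unfolding Phi_def by (auto intro!: sum_nonneg FF_nonneg)

lemma step_Phi:
  "(\<integral>\<^sup>+y. ennreal (Phi h m y) \<partial>step h m A hs) = ennreal (Phi h m hs)"
proof -
  have "(\<integral>\<^sup>+y. ennreal (Phi h m y) \<partial>step h m A hs)
      = (\<integral>\<^sup>+y. (\<Sum>l\<in>{l::bool list. length l = h}. ennreal (FF m y l)) \<partial>step h m A hs)"
    unfolding Phi_def by (simp add: FF_nonneg)
  also have "\<dots> = (\<Sum>l\<in>{l::bool list. length l = h}. \<integral>\<^sup>+y. ennreal (FF m y l) \<partial>step h m A hs)"
    by (rule nn_integral_sum) auto
  also have "\<dots> = (\<Sum>l\<in>{l::bool list. length l = h}. ennreal (FF m hs l))"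
    by (intro sum.cong refl) (simp add: step_FF)
  also have "\<dots> = ennreal (Phi h m hs)"
    unfolding Phi_def by (simp add: FF_nonneg)
  finally show ?thesis .
qed

lemma exec_Phi:
  "(\<integral>\<^sup>+y. ennreal (Phi h m y) \<partial>exec h m A N) = ennreal (Phi h m [])"
proof (induction N)
  case 0
  then show ?case by (simp add: Phi_nonneg)
next
  case (Suc N)
  have "(\<integral>\<^sup>+y. ennreal (Phi h m y) \<partial>exec h m A (Suc N))
     = (\<integral>\<^sup>+x. \<integral>\<^sup>+y. ennreal (Phi h m y) \<partial>step h m A x \<partial>exec h m A N)"
    by simp
  also have "\<dots> = (\<integral>\<^sup>+x. ennreal (Phi h m x) \<partial>exec h m A N)"
    by (simp add: step_Phi)
  finally show ?case using Suc by simp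
qed

lemma Phi_init: "Phi h m [] = 2 ^ h * (1 + 3 / 2 ^ h) ^ m"
proof -
  have "\<And>l i. length l = h \<Longrightarrow> qv [] l i = 1 / 2 ^ h"
    by (simp add: qv_def path_of_def)
  then have "\<And>l. length l = h \<Longrightarrow> FF m [] l = (1 + 3 / 2 ^ h) ^ m"
    by (simp add: FF_def)
  then have "Phi h m [] = (\<Sum>l\<in>{l::bool list. length l = h}. (1 + 3 / 2 ^ h) ^ m)"
    unfolding Phi_def by (intro sum.cong) auto
  also have "\<dots> = card {l::bool list. length l = h} * (1 + 3 / 2 ^ h) ^ m" by simp
  also have "card {l::bool list. length l = h} = 2 ^ h"
    using card_lists_length_eq[of "UNIV::bool set" h] by simp
  finally show ?thesis by simp
qed

lemma bad_Phi:
  assumes "length l = h" "leaf_visits m hs l \<ge> t"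
  shows "Phi h m hs \<ge> 4 ^ t"
proof -
  define V where "V = {i. i < m \<and> path_of hs i = l}"
  have Vsub: "V \<subseteq> {..<m}" by (auto simp: V_def)
  have cV: "card V \<ge> t" using assms(2) by (simp add: leaf_visits_def V_def)
  have q1: "\<And>i. i \<in> V \<Longrightarrow> qv hs l i = 1" by (auto simp: V_def qv_def)
  have "(\<Prod>i<m. (if i \<in> V then 4 else 1::real)) \<le> FF m hs l"
    unfolding FF_def
    by (intro prod_mono) (auto simp: q1 qv_nonneg)
  moreover have "(\<Prod>i<m. (if i \<in> V then 4 else 1::real)) = 4 ^ card V"
    using Vsub by (simp add: prod.If_cases Int_absorb1 Int_absorb2)
  moreover have "(4::real) ^ t \<le> 4 ^ card V" using cV by (intro power_increasing) auto
  moreover have "FF m hs l \<le> Phi h m hs"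
    unfolding Phi_def using assms(1)
    by (intro member_le_sum finite_leaves) (auto simp: FF_nonneg)
  ultimately show ?thesis by linarith
qed

lemma markov_Phi:
  assumes "c > 0"
  shows "measure_pmf.prob (exec h m A N) {hs. Phi h m hs \<ge> c} \<le> Phi h m [] / c"
proof -
  let ?M = "exec h m A N"
  have "emeasure ?M {x \<in> UNIV. 1 \<le> ennreal (1/c) * ennreal (Phi h m x)}
      \<le> ennreal (1/c) * (\<integral>\<^sup>+x. ennreal (Phi h m x) * indicator UNIV x \<partial>?M)"
    by (rule nn_integral_Markov_inequality) auto
  also have "\<dots> = ennreal (1/c) * ennreal (Phi h m [])"
    using exec_Phi by simp
  also have "\<dots> = ennreal (Phi h m [] / c)"
    using assms by (simp add: ennreal_mult[symmetric] Phi_nonneg)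
  also have "{x \<in> UNIV. 1 \<le> ennreal (1/c) * ennreal (Phi h m x)} = {hs. Phi h m hs \<ge> c}"
  proof -
    have "\<And>x. (1 \<le> ennreal (1/c) * ennreal (Phi h m x)) = (c \<le> Phi h m x)"
    proof -
      fix x
      have "ennreal (1/c) * ennreal (Phi h m x) = ennreal (Phi h m x / c)"
        using assms by (simp add: ennreal_mult[symmetric] Phi_nonneg)
      moreover have "(1 \<le> ennreal (Phi h m x / c)) = (1 \<le> Phi h m x / c)"
        using ennreal_le_iff[of "Phi h m x / c" 1] assms Phi_nonneg[of h m x]
        by (metis ennreal_1 ennreal_le_iff2 ennreal_neg zero_le_divide_iff less_imp_le zero_less_one not_le)
      moreover have "(1 \<le> Phi h m x / c) = (c \<le> Phi h m x)"
        using assms by (simp add: le_divide_eq)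
      ultimately show "?thesis x" by simp
    qed
    then show ?thesis by simp
  qed
  finally have "ennreal (measure_pmf.prob ?M {hs. Phi h m hs \<ge> c}) \<le> ennreal (Phi h m [] / c)"
    by (simp add: measure_pmf.emeasure_eq_measure)
  then show ?thesis
    using assms by (simp add: ennreal_le_iff Phi_nonneg)
qed

lemma numeric:
  fixes n k j m h :: nat
  assumes "n = 2 ^ k" and "k = 2 ^ j" and "h = k - j" and "m \<le> n"
  shows "2 ^ h * (1 + 3 / 2 ^ h) ^ m / 4 ^ (4 * k + 1) \<le> 1 / real n"
proof -
  have jk: "j < k" using assms(2) less_exp by simp
  have kjh: "k = j + h" using jk assms(3) by simp
  have "(2::nat) ^ k = k * 2 ^ h" using kjh assms(2) by (simp add: power_add)
  then have mk: "real m \<le> real k * 2 ^ h" using assms(4) assms(1)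
    by (metis of_nat_le_iff of_nat_mult of_nat_numeral of_nat_power)
  have hpos: "(0::real) < 2 ^ h" by simp
  have e1: "real m * (3 / 2 ^ h) \<le> 3 * real k"
    using mk hpos by (simp add: field_simps)
  have "(1 + 3 / 2 ^ h) ^ m \<le> (exp (3 / (2::real) ^ h)) ^ m"
    by (intro power_mono) (auto simp: exp_ge_add_one_self add_nonneg_nonneg)
  also have "\<dots> = exp (real m * (3 / 2 ^ h))" by (metis exp_of_nat_mult)
  also have "\<dots> \<le> exp (real (3 * k))" using e1 by simp
  also have "\<dots> = exp 1 ^ (3 * k)" by (metis exp_of_nat_mult mult.right_neutral)
  also have "\<dots> \<le> 3 ^ (3 * k)" by (intro power_mono exp_le) auto
  also have "\<dots> = 27 ^ k" by (simp add: power_mult)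
  finally have p1: "(1 + 3 / 2 ^ h) ^ m \<le> (27::real) ^ k" .
  have p2: "(2::real) ^ h \<le> 2 ^ k" using kjh by (intro power_increasing) auto
  have "2 ^ h * (1 + 3 / 2 ^ h) ^ m \<le> (2::real) ^ k * 27 ^ k"
    by (intro mult_mono p1 p2) auto
  also have "(2::real) ^ k * 27 ^ k \<le> 4 ^ (4 * k + 1) / 2 ^ k"
  proof -
    have "(108::real) ^ k \<le> 256 ^ k" by (intro power_mono) auto
    also have "\<dots> \<le> 4 * 256 ^ k" by simp
    moreover have "(4::real) ^ (4 * k + 1) = 4 * 256 ^ k"
      by (simp add: power_add power_mult)
    moreover have "(2::real) ^ k * 27 ^ k * 2 ^ k = 108 ^ k"
      by (simp add: power_mult_distrib[symmetric])
    ultimately have "(2::real) ^ k * 27 ^ k * 2 ^ k \<le> 4 ^ (4 * k + 1)"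
      using zero_le_power[of "256::real" k] by linarith
    then show ?thesis by (simp add: field_simps)
  qed
  finally show ?thesis using assms(1) by (simp add: field_simps)
qed

theorem lemma8:
  fixes n k j m h N :: nat and A :: adversary
  assumes "n = 2 ^ k" and "k = 2 ^ j"
    and "h = k - j"
    and "m \<le> n"
  shows "measure_pmf.prob (exec h m A N)
           {hs. \<forall>l. length l = h \<longrightarrow> leaf_visits m hs l \<le> 4 * k}
         \<ge> 1 - 1 / real n"
proof -
  let ?M = "exec h m A N"
  let ?G = "{hs. \<forall>l. length l = h \<longrightarrow> leaf_visits m hs l \<le> 4 * k}"
  let ?c = "(4::real) ^ (4 * k + 1)"
  have sub: "- ?G \<subseteq> {hs. Phi h m hs \<ge> ?c}"
  proof
    fix hs assume "hs \<in> - ?G"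
    then obtain l where "length l = h" "leaf_visits m hs l \<ge> 4 * k + 1" by auto
    then show "hs \<in> {hs. Phi h m hs \<ge> ?c}" using bad_Phi by blast
  qed
  have "measure_pmf.prob ?M (- ?G) \<le> measure_pmf.prob ?M {hs. Phi h m hs \<ge> ?c}"
    using sub by (intro measure_pmf.finite_measure_mono) auto
  also have "\<dots> \<le> Phi h m [] / ?c" by (rule markov_Phi) simp
  also have "\<dots> \<le> 1 / real n" unfolding Phi_init using numeric[OF assms] .
  finally have "measure_pmf.prob ?M (- ?G) \<le> 1 / real n" .
  moreover have "measure_pmf.prob ?M (- ?G) = 1 - measure_pmf.prob ?M ?G"
    using measure_pmf.prob_compl[of ?G ?M] by (simp add: Compl_eq_Diff_UNIV)
  ultimately show ?thesis by linarith
qed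

end
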